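(* Fix integers $K,M\ge1$, $L\ge2$, $N_r\ge1$, and constants $T_{s,k}>0$, $E_{p,k}\ge0$, $E_k>0$, $T_c>0$, $X_k(m)>0$, $\mu_{\ell,m}\in\mathbb{R}$, $\sigma_m^2>0$, $\sigma_{s,k}^2\ge0$, $\sigma_r^2\ge0$, $N_0>0$, and $\mathbf h_{k,m}\in\mathbb{C}^{N_r}$. Consider the problem $\mathcal P_4$: maximize $\alpha$ over variables $\alpha\in\mathbb R$, $P_{s,k}>0$, $c_{k,m}\in\mathbb R$ ($c_{k,m}\ge 0$), $\mathbf f_m\in\mathbb C^{N_r}$ (viewed as a vector of real and imaginary parts), $u_{k,m}>0$, $v_{\ell,\ell',m}>0$, subject to $$P_{s,k}T_{s,k}+E_{p,k}+T_c\sum_{m=1}^M u_{k,m}X_k(m)-E_k\le0\quad(1\le k\le K),$$ $$\alpha-\sum_{m=1}^M v_{\ell,\ell',m}\le0\quad(1\le\ell\ne\ell'\le L),$$ $$\frac{c_{k,m}^2}{u_{k,m}}-R_{k,m}(\mathbf f_m)\le0\quad(\forall k,m),$$ $$Z_m(\{P_{s,k}\},\{c_{k,m}\},\mathbf f_m)-Q_{\ell,\ell',m}(\{c_{k,m}\},v_{\ell,\ell',m})\le0\quad(\forall \ell\ne\ell',m),$$ where $R_{k,m}(\mathbf f_m)=\mathbf h_{k,m}^H\mathbf f_m\mathbf f_m^H\mathbf h_{k,m}$, $$Z_m=\sigma_m^2\Big(\sum_{k=1}^K c_{k,m}\Big)^2+\sum_{k=1}^K c_{k,m}^2\Big(\sigma_{s,k}^2+\frac{\sigma_r^2}{P_{s,k}}\Big)+N_0\mathbf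 f_m^H\mathbf f_m,\qquad Q_{\ell,\ell',m}=\frac{(\mu_{\ell,m}-\mu_{\ell',m})^2}{v_{\ell,\ell',m}}\Big(\sum_{k=1}^K c_{k,m}\Big)^2.$$ Then $\mathcal P_4$ is a d.c. problem.
   Context: A d.c. (difference-of-convex) problem is an optimization problem whose objective function and all constraint functions can each be written as the difference of two convex functions on the (convex) domain of the variables. Here the domain is $P_{s,k}>0$, $u_{k,m}>0$, $v_{\ell,\ell',m}>0$, $c_{k,m}$ real, and $\mathbf f_m\in\mathbb C^{N_r}\cong\mathbb R^{2N_r}$. *)

theory Defs
  imports "HOL-Analysis.Analysis"
begin

definition dc_on :: "'a::real_vector set \<Rightarrow> ('a \<Rightarrow> real) \<Rightarrow> bool" where
  "dc_on S F \<longleftrightarrow> (\<exists>g h. convex_on S g \<and> convex_on S h \<and> (\<forall>x\<in>S. F x = g x - h x))"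

definition dc_problem :: "'a::real_vector set \<Rightarrow> ('a \<Rightarrow> real) \<Rightarrow> ('a \<Rightarrow> real) set \<Rightarrow> bool" where
  "dc_problem S obj C \<longleftrightarrow> convex S \<and> dc_on S obj \<and> (\<forall>F\<in>C. dc_on S F)"

text \<open>Variables (alpha, P, c, f, u, v); c\$m\$k, f\$m\$i, u\$m\$k, v\$l\$l'\$m.\<close>
type_synonym ('k,'m,'l,'n) P4var =
  "real \<times> (real^'k) \<times> (real^'k^'m) \<times> (complex^'n^'m) \<times> (real^'k^'m) \<times> (real^'m^'l^'l)"

definition P4_domain :: "('k::finite,'m::finite,'l::finite,'n::finite) P4var set" where
  "P4_domain = {(\<alpha>,P,c,f,u,v). (\<forall>k. P$k > 0) \<and> (\<forall>k m. u$m$k > 0) \<and> (\<forall>l l' m. v$l$l'$m > 0)}"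

definition P4_obj :: "('k::finite,'m::finite,'l::finite,'n::finite) P4var \<Rightarrow> real" where
  "P4_obj = (\<lambda>(\<alpha>,P,c,f,u,v). \<alpha>)"

definition R_fun :: "(complex^'n::finite) \<Rightarrow> (complex^'n) \<Rightarrow> real" where
  "R_fun h fm = Re ((\<Sum>i\<in>UNIV. cnj (h$i) * fm$i) * (\<Sum>i\<in>UNIV. cnj (fm$i) * h$i))"

definition P4_constraints ::
  "('k::finite \<Rightarrow> real) \<Rightarrow> ('k \<Rightarrow> real) \<Rightarrow> ('k \<Rightarrow> real) \<Rightarrow> real \<Rightarrow> ('k \<Rightarrow> 'm::finite \<Rightarrow> real)
   \<Rightarrow> ('l::finite \<Rightarrow> 'm \<Rightarrow> real) \<Rightarrow> ('m \<Rightarrow> real) \<Rightarrow> ('k \<Rightarrow> real) \<Rightarrow> real \<Rightarrow> real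
   \<Rightarrow> ('k \<Rightarrow> 'm \<Rightarrow> complex^'n::finite)
   \<Rightarrow> (('k,'m,'l,'n) P4var \<Rightarrow> real) set" where
  "P4_constraints Ts Ep E Tc X \<mu> \<sigma>m2 \<sigma>s2 \<sigma>r2 N0 h =
     (\<Union>k. {\<lambda>(\<alpha>,P,c,f,u,v). P$k * Ts k + Ep k + Tc * (\<Sum>m\<in>UNIV. u$m$k * X k m) - E k})
   \<union> (\<Union>l. \<Union>l'\<in>{l'. l' \<noteq> l}. {\<lambda>(\<alpha>,P,c,f,u,v). \<alpha> - (\<Sum>m\<in>UNIV. v$l$l'$m)})
   \<union> (\<Union>k. \<Union>m. {\<lambda>(\<alpha>,P,c,f,u,v). - (c$m$k)})
   \<union> (\<Union>k. \<Union>m. {\<lambda>(\<alpha>,P,c,f,u,v). (c$m$k)^2 / (u$m$k) - R_fun (h k m) (f$m)})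
   \<union> (\<Union>l. \<Union>l'\<in>{l'. l' \<noteq> l}. \<Union>m.
       {\<lambda>(\<alpha>,P,c,f,u,v).
          (\<sigma>m2 m * (\<Sum>k\<in>UNIV. c$m$k)^2
           + (\<Sum>k\<in>UNIV. (c$m$k)^2 * (\<sigma>s2 k + \<sigma>r2 / P$k))
           + N0 * Re (\<Sum>i\<in>UNIV. cnj (f$m$i) * f$m$i))
          - ((\<mu> l m - \<mu> l' m)^2 / (v$l$l'$m)) * (\<Sum>k\<in>UNIV. c$m$k)^2})"

end

theory Submission
  imports Defs
begin


definition affn :: "('a::real_vector \<Rightarrow> real) \<Rightarrow> bool" where
  "affn a \<longleftrightarrow> (\<forall>x y u v. u + v = 1 \<longrightarrow> a (u *\<^sub>R x + v *\<^sub>R y) = u * a x + v * a y)"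

lemma qol_ineq:
  fixes a1 a2 b1 b2 s t :: real
  assumes "b1 > 0" "b2 > 0" "s \<ge> 0" "t \<ge> 0" "s + t = 1"
  shows "(s * a1 + t * a2)^2 / (s * b1 + t * b2) \<le> s * (a1^2/b1) + t * (a2^2/b2)"
proof -
  have B: "s * b1 + t * b2 > 0"
    using assms by (smt (verit) mult_nonneg_nonneg mult_pos_pos)
  have key: "(s * a1 + t * a2)^2 * (b1*b2) \<le> (s * b1 + t * b2) * (s * a1^2*b2 + t * a2^2*b1)"
  proof -
    have "(s * b1 + t * b2) * (s * a1^2*b2 + t * a2^2*b1) - (s * a1 + t * a2)^2 * (b1*b2)
        = s * t * (a1*b2 - a2*b1)^2"
      using assms(5) by (simp add: power2_eq_square algebra_simps)
    moreover have "s * t * (a1*b2 - a2*b1)^2 \<ge> 0" using assms by simp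
    ultimately show ?thesis by linarith
  qed
  have "s * (a1^2/b1) + t * (a2^2/b2) = (s * a1^2*b2 + t * a2^2*b1) / (b1*b2)"
    using assms by (simp add: field_simps)
  then show ?thesis using key B assms
    by (simp add: divide_simps mult.commute mult.left_commute)
qed

lemma convex_on_qol:
  assumes S: "convex S" and a: "affn a" and b: "affn b" and pos: "\<forall>x\<in>S. b x > 0"
  shows "convex_on S (\<lambda>x. (a x)^2 / b x)"
  unfolding convex_on_def
proof (intro conjI S ballI allI impI)
  fix x y and s t :: real
  assume xy: "x \<in> S" "y \<in> S" and st: "0 \<le> s" "0 \<le> t" "s + t = 1"
  have "a (s *\<^sub>R x + t *\<^sub>R y) = s * a x + t * a y" "b (s *\<^sub>R x + t *\<^sub>R y) = s * b x + t * b y"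
    using a b st unfolding affn_def by auto
  then show "(a (s *\<^sub>R x + t *\<^sub>R y))^2 / b (s *\<^sub>R x + t *\<^sub>R y) \<le> s * ((a x)^2 / b x) + t * ((a y)^2 / b y)"
    using qol_ineq[of "b x" "b y" s t "a x" "a y"] pos xy st by simp
qed

lemma affn_const: "affn (\<lambda>x. c)"
  unfolding affn_def by (metis distrib_right mult_1)

lemma convex_on_sq:
  assumes S: "convex S" and a: "affn a"
  shows "convex_on S (\<lambda>x. (a x)^2)"
  using convex_on_qol[OF S a affn_const[of 1]] by simp

lemma convex_on_affn:
  assumes S: "convex S" and a: "affn a"
  shows "convex_on S a"
  using a S unfolding convex_on_def affn_def by simp

lemma convex_on_sum_fun:
  assumes "finite I" "convex S" "\<And>i. i \<in> I \<Longrightarrow> convex_on S (f i)"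
  shows "convex_on S (\<lambda>x. \<Sum>i\<in>I. f i x)"
  using assms
proof (induction I rule: finite_induct)
  case empty then show ?case by (simp add: convex_on_const)
next
  case (insert i I) then show ?case by (simp add: convex_on_add)
qed

lemma dc_onI2:
  assumes "convex_on S g" "convex_on S h" "\<And>x. x \<in> S \<Longrightarrow> F x = g x - h x"
  shows "dc_on S F"
  unfolding dc_on_def using assms by blast

lemma dc_on_affn:
  assumes "convex S" "affn F" shows "dc_on S F"
  by (rule dc_onI2[where g=F and h="\<lambda>x. 0"]) (auto simp: assms convex_on_affn convex_on_const)

lemma pos_comb: "0 < a \<Longrightarrow> 0 < b \<Longrightarrow> 0 \<le> s \<Longrightarrow> 0 \<le> t \<Longrightarrow> s + t = (1::real) \<Longrightarrow> 0 < s * a + t * b"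
  by (smt (verit) mult_nonneg_nonneg mult_pos_pos)

lemma convex_P4_domain: "convex (P4_domain :: ('k::finite,'m::finite,'l::finite,'n::finite) P4var set)"
  unfolding convex_def P4_domain_def
  by (auto intro!: pos_comb)

lemma affnI: "(\<And>x y u. a (u *\<^sub>R x + (1-u) *\<^sub>R y) = u * a x + (1-u) * a y) \<Longrightarrow> affn a"
  unfolding affn_def by (metis add_diff_cancel_left')

lemma aff1: "affn (\<lambda>(\<alpha>,P,c,f,u,v). P$k * Ts k + Ep k + Tc * (\<Sum>m\<in>UNIV. u$m$k * X k m) - (E k::real))"
  by (rule affnI) (auto simp: split_beta algebra_simps sum.distrib sum_distrib_left sum_subtractf)

lemma aff2: "affn (\<lambda>(\<alpha>,P,c,f,u,v). \<alpha> - (\<Sum>m\<in>UNIV. v$l$l'$m))"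
  by (rule affnI) (auto simp: split_beta algebra_simps sum.distrib sum_distrib_left sum_subtractf)

lemma aff3: "affn (\<lambda>(\<alpha>,P,c,f,u,v). - (c$m$k))"
  by (rule affnI) (auto simp: split_beta algebra_simps)

lemma aff_c: "affn (\<lambda>(\<alpha>,P,c,f,u,v). (c$m$k))"
  by (rule affnI) (auto simp: split_beta algebra_simps)
lemma aff_u: "affn (\<lambda>(\<alpha>,P,c,f,u,v). (u$m$k))"
  by (rule affnI) (auto simp: split_beta algebra_simps)
lemma aff_P: "affn (\<lambda>(\<alpha>,P,c,f,u,v). (P$k))"
  by (rule affnI) (auto simp: split_beta algebra_simps)
lemma aff_v: "affn (\<lambda>(\<alpha>,P,c,f,u,v). (v$l$l'$m))"
  by (rule affnI) (auto simp: split_beta algebra_simps)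
lemma aff_sc: "affn (\<lambda>(\<alpha>,P,c,f,u,v). (\<Sum>k\<in>UNIV. c$m$k))"
  by (rule affnI) (auto simp: split_beta algebra_simps sum.distrib sum_distrib_left sum_subtractf)
lemma aff_Ref: "affn (\<lambda>(\<alpha>,P,c,f,u,v). Re (f$m$i))"
  by (rule affnI) (auto simp: split_beta algebra_simps)
lemma aff_Imf: "affn (\<lambda>(\<alpha>,P,c,f,u,v). Im (f$m$i))"
  by (rule affnI) (auto simp: split_beta algebra_simps)
lemma aff_Rez: "affn (\<lambda>(\<alpha>,P,c,f,u,v). Re (\<Sum>i\<in>UNIV. cnj (hh$i) * f$m$i))"
  by (rule affnI) (auto simp: split_beta algebra_simps sum.distrib sum_distrib_left sum_subtractf Re_sum Im_sum)
lemma aff_Imz: "affn (\<lambda>(\<alpha>,P,c,f,u,v). Im (\<Sum>i\<in>UNIV. cnj (hh$i) * f$m$i))"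
  by (rule affnI) (auto simp: split_beta algebra_simps sum.distrib sum_distrib_left sum_subtractf Re_sum Im_sum)

lemma R_fun_eq: "R_fun hh fm = (Re (\<Sum>i\<in>UNIV. cnj (hh$i) * fm$i))^2 + (Im (\<Sum>i\<in>UNIV. cnj (hh$i) * fm$i))^2"
proof -
  have "(\<Sum>i\<in>UNIV. cnj (fm$i) * hh$i) = cnj (\<Sum>i\<in>UNIV. cnj (hh$i) * fm$i)"
    by (simp add: mult.commute)
  then show ?thesis unfolding R_fun_def by (simp only: complex_mult_cnj Re_complex_of_real)
qed

lemma dom_pos:
  assumes "x \<in> P4_domain"
  shows "(\<lambda>(\<alpha>,P,c,f,u,v). (u$m$k)) x > 0" "(\<lambda>(\<alpha>,P,c,f,u,v). (P$k)) x > 0"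
    "(\<lambda>(\<alpha>,P,c,f,u,v). (v$l$l'$m)) x > 0"
  using assms unfolding P4_domain_def by auto

lemma C4: "dc_on (P4_domain :: ('k::finite,'m::finite,'l::finite,'n::finite) P4var set)
   (\<lambda>(\<alpha>,P,c,f,u,v). (c$m$k)^2 / (u$m$k) - R_fun hh (f$m))"
proof -
  note cvx = convex_P4_domain[where 'k='k and 'm='m and 'l='l and 'n='n]
  have g: "convex_on (P4_domain :: ('k,'m,'l,'n) P4var set)
     (\<lambda>x. ((\<lambda>(\<alpha>,P,c,f,u,v). (c$m$k)) x)^2 / (\<lambda>(\<alpha>,P,c,f,u,v). (u$m$k)) x)"
    by (rule convex_on_qol[OF cvx aff_c aff_u]) (auto simp: P4_domain_def)
  have h: "convex_on (P4_domain :: ('k,'m,'l,'n) P4var set)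
     (\<lambda>x. ((\<lambda>(\<alpha>,P,c,f,u,v). Re (\<Sum>i\<in>UNIV. cnj (hh$i) * f$m$i)) x)^2
         + ((\<lambda>(\<alpha>,P,c,f,u,v). Im (\<Sum>i\<in>UNIV. cnj (hh$i) * f$m$i)) x)^2)"
    by (intro convex_on_add convex_on_sq[OF cvx] aff_Rez aff_Imz)
  show ?thesis
    by (rule dc_onI2[OF g h]) (simp add: split_beta R_fun_eq)
qed

lemma C5:
  assumes "\<forall>m. \<sigma>m2 m > 0" and "\<forall>k. \<sigma>s2 k \<ge> 0" and "\<sigma>r2 \<ge> 0" and "N0 > 0"
  shows "dc_on (P4_domain :: ('k::finite,'m::finite,'l::finite,'n::finite) P4var set)
     (\<lambda>(\<alpha>,P,c,f,u,v).
          (\<sigma>m2 m * (\<Sum>k\<in>UNIV. c$m$k)^2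
           + (\<Sum>k\<in>UNIV. (c$m$k)^2 * (\<sigma>s2 k + \<sigma>r2 / P$k))
           + N0 * Re (\<Sum>i\<in>UNIV. cnj (f$m$i) * f$m$i))
          - ((\<mu> l m - \<mu> l' m)^2 / (v$l$l'$m)) * (\<Sum>k\<in>UNIV. c$m$k)^2)"
proof -
  note cvx = convex_P4_domain[where 'k='k and 'm='m and 'l='l and 'n='n]
  have g: "convex_on (P4_domain :: ('k,'m,'l,'n) P4var set)
     (\<lambda>x. \<sigma>m2 m * ((\<lambda>(\<alpha>,P,c,f,u,v). \<Sum>k\<in>UNIV. c$m$k) x)^2
       + (\<Sum>k\<in>UNIV. \<sigma>s2 k * ((\<lambda>(\<alpha>,P,c,f,u,v). c$m$k) x)^2
           + \<sigma>r2 * (((\<lambda>(\<alpha>,P,c,f,u,v). c$m$k) x)^2 / (\<lambda>(\<alpha>,P,c,f,u,v). P$k) x))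
       + N0 * (\<Sum>i\<in>UNIV. ((\<lambda>(\<alpha>,P,c,f,u,v). Re (f$m$i)) x)^2
                  + ((\<lambda>(\<alpha>,P,c,f,u,v). Im (f$m$i)) x)^2))"
    using assms
    by (intro convex_on_add convex_on_cmul convex_on_sum_fun convex_on_sq[OF cvx]
         convex_on_qol[OF cvx aff_c aff_P] aff_sc aff_c aff_Ref aff_Imf finite cvx)
       (auto simp: P4_domain_def less_imp_le)
  have h: "convex_on (P4_domain :: ('k,'m,'l,'n) P4var set)
     (\<lambda>x. (\<mu> l m - \<mu> l' m)^2 * (((\<lambda>(\<alpha>,P,c,f,u,v). \<Sum>k\<in>UNIV. c$m$k) x)^2
          / (\<lambda>(\<alpha>,P,c,f,u,v). v$l$l'$m) x))"
    by (intro convex_on_cmul convex_on_qol[OF cvx aff_sc aff_v]) (auto simp: P4_domain_def)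
  show ?thesis
    by (rule dc_onI2[OF g h]) (simp add: split_beta Re_sum power2_eq_square algebra_simps sum.distrib)
qed

theorem lemma3:
  fixes Ts Ep E :: "'k::finite \<Rightarrow> real" and Tc :: real and X :: "'k \<Rightarrow> 'm::finite \<Rightarrow> real"
    and \<mu> :: "'l::finite \<Rightarrow> 'm \<Rightarrow> real" and \<sigma>m2 :: "'m \<Rightarrow> real" and \<sigma>s2 :: "'k \<Rightarrow> real"
    and \<sigma>r2 N0 :: real and h :: "'k \<Rightarrow> 'm \<Rightarrow> complex^'n::finite"
  assumes "CARD('l) \<ge> 2"
    and "\<forall>k. Ts k > 0" and "\<forall>k. Ep k \<ge> 0" and "\<forall>k. E k > 0" and "Tc > 0"
    and "\<forall>k m. X k m > 0" and "\<forall>m. \<sigma>m2 m > 0" and "\<forall>k. \<sigma>s2 k \<ge> 0"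
    and "\<sigma>r2 \<ge> 0" and "N0 > 0"
  shows "dc_problem (P4_domain :: ('k,'m,'l,'n) P4var set) P4_obj
           (P4_constraints Ts Ep E Tc X \<mu> \<sigma>m2 \<sigma>s2 \<sigma>r2 N0 h)"
proof -
  note cvx = convex_P4_domain[where 'k='k and 'm='m and 'l='l and 'n='n]
  have obj: "affn (P4_obj :: ('k,'m,'l,'n) P4var \<Rightarrow> real)"
    by (rule affnI) (simp add: P4_obj_def split_beta)
  have cons: "\<forall>F\<in>P4_constraints Ts Ep E Tc X \<mu> \<sigma>m2 \<sigma>s2 \<sigma>r2 N0 h. dc_on (P4_domain :: ('k,'m,'l,'n) P4var set) F"
    unfolding P4_constraints_def
    apply (intro ballI)
    apply (elim UnE UN_E insertE emptyE)
    apply (hypsubst, rule dc_on_affn[OF cvx aff1])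
    apply (hypsubst, rule dc_on_affn[OF cvx aff2])
    apply (hypsubst, rule dc_on_affn[OF cvx aff3])
    apply (hypsubst, rule C4)
    apply (hypsubst, rule C5[OF assms(7-10)])
    done
  show ?thesis
    unfolding dc_problem_def using cvx dc_on_affn[OF cvx obj] cons by blast
qed

end
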